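(* Let $G$ be a connected chordal graph with at least two vertices. A vertex $v\in V(G)$ is an $\mathcal{F}$-branch leaf of some BFS ordering of $G$ if and only if the radius of the induced subgraph $G[N_G(v)]$ is at most two.
   Context: Graphs are finite, simple, undirected; $N_G(v)$ is the open neighborhood of $v$. A graph is chordal if it has no induced cycle of length at least 4. The eccentricity of a vertex is its largest distance to any other vertex, and the radius of a graph is the smallest eccentricity of its vertices (infinite if the graph is disconnected). A vertex ordering of $G$ is a bijection $\sigma:\{1,\dots,n\}\to V(G)$; $u\prec_\sigma w$ means $u$ comes before $w$. BFS orderings are produced by the label search: initially all labels are $\emptyset$; for $i=1,\dots,n$ choose any unnumbered vertex $x$ such that there is no unnumbered $y$ with $\mathrm{label}(x)\prec\mathrm{label}(y)$, set $\sigma(i)=x$, and add $i$ to the labels of the unnumbered neighbors of $x$, where $A\prec B$ iff ($A=\emptyset$ and $B\neq\emptyset$) or $\min(A)>\min(B)$. The $\mathcal{F}$-tree of $\sigma$ is the spanning tree containing, for each $v\neq\sigma(1)$, the edge from $v$ to its leftmost neighbor in $\sigma$. A vertex $v\neq\sigma(1)$ that is a leaf of the $\mathcal{F}$-tree is an $\mathcal{F}$-branch leaf of $\sigma$. *)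

theory Defs
  imports Main "HOL-Library.Extended_Nat"
begin

definition simple_graph :: "'a set \<Rightarrow> ('a \<Rightarrow> 'a \<Rightarrow> bool) \<Rightarrow> bool" where
  "simple_graph V E \<longleftrightarrow> finite V \<and> (\<forall>x y. E x y \<longrightarrow> x \<in> V \<and> y \<in> V)
     \<and> (\<forall>x y. E x y \<longrightarrow> E y x) \<and> (\<forall>x. \<not> E x x)"

definition nbhd :: "('a \<Rightarrow> 'a \<Rightarrow> bool) \<Rightarrow> 'a \<Rightarrow> 'a set" where
  "nbhd E v = {w. E v w}"

definition induced_adj :: "('a \<Rightarrow> 'a \<Rightarrow> bool) \<Rightarrow> 'a set \<Rightarrow> 'a \<Rightarrow> 'a \<Rightarrow> bool" where
  "induced_adj E S x y \<longleftrightarrow> E x y \<and> x \<in> S \<and> y \<in> S"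

definition walk :: "'a set \<Rightarrow> ('a \<Rightarrow> 'a \<Rightarrow> bool) \<Rightarrow> 'a list \<Rightarrow> bool" where
  "walk V E p \<longleftrightarrow> p \<noteq> [] \<and> set p \<subseteq> V \<and> (\<forall>i. Suc i < length p \<longrightarrow> E (p ! i) (p ! Suc i))"

definition connected_graph :: "'a set \<Rightarrow> ('a \<Rightarrow> 'a \<Rightarrow> bool) \<Rightarrow> bool" where
  "connected_graph V E \<longleftrightarrow> (\<forall>u\<in>V. \<forall>w\<in>V. \<exists>p. walk V E p \<and> hd p = u \<and> last p = w)"

text \<open>Distance (infinite if no walk exists), eccentricity, radius.\<close>
definition gdist :: "'a set \<Rightarrow> ('a \<Rightarrow> 'a \<Rightarrow> bool) \<Rightarrow> 'a \<Rightarrow> 'a \<Rightarrow> enat" where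
  "gdist V E u w = (INF p \<in> {p. walk V E p \<and> hd p = u \<and> last p = w}. enat (length p - 1))"

definition ecc :: "'a set \<Rightarrow> ('a \<Rightarrow> 'a \<Rightarrow> bool) \<Rightarrow> 'a \<Rightarrow> enat" where
  "ecc V E v = (SUP w \<in> V. gdist V E v w)"

definition radius :: "'a set \<Rightarrow> ('a \<Rightarrow> 'a \<Rightarrow> bool) \<Rightarrow> enat" where
  "radius V E = (INF v \<in> V. ecc V E v)"

definition induced_cycle :: "'a set \<Rightarrow> ('a \<Rightarrow> 'a \<Rightarrow> bool) \<Rightarrow> 'a list \<Rightarrow> bool" where
  "induced_cycle V E xs \<longleftrightarrow> length xs \<ge> 3 \<and> distinct xs \<and> set xs \<subseteq> V \<and>
     (\<forall>i < length xs. \<forall>j < length xs.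
        E (xs ! i) (xs ! j) \<longleftrightarrow> (j = Suc i mod length xs \<or> i = Suc j mod length xs))"

definition chordal :: "'a set \<Rightarrow> ('a \<Rightarrow> 'a \<Rightarrow> bool) \<Rightarrow> bool" where
  "chordal V E \<longleftrightarrow> \<not> (\<exists>xs. induced_cycle V E xs \<and> length xs \<ge> 4)"

definition vertex_ordering :: "'a set \<Rightarrow> (nat \<Rightarrow> 'a) \<Rightarrow> bool" where
  "vertex_ordering V \<sigma> \<longleftrightarrow> bij_betw \<sigma> {1..card V} V"

definition bfs_label :: "('a \<Rightarrow> 'a \<Rightarrow> bool) \<Rightarrow> (nat \<Rightarrow> 'a) \<Rightarrow> nat \<Rightarrow> 'a \<Rightarrow> nat set" where
  "bfs_label E \<sigma> i y = {j. 1 \<le> j \<and> j < i \<and> E (\<sigma> j) y}"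

definition bfs_prec :: "nat set \<Rightarrow> nat set \<Rightarrow> bool" where
  "bfs_prec A B \<longleftrightarrow> (A = {} \<and> B \<noteq> {}) \<or> (A \<noteq> {} \<and> B \<noteq> {} \<and> Min A > Min B)"

definition bfs_ordering :: "'a set \<Rightarrow> ('a \<Rightarrow> 'a \<Rightarrow> bool) \<Rightarrow> (nat \<Rightarrow> 'a) \<Rightarrow> bool" where
  "bfs_ordering V E \<sigma> \<longleftrightarrow> vertex_ordering V \<sigma> \<and>
     (\<forall>i \<in> {1..card V}. \<forall>y \<in> V - \<sigma> ` {1..<i}.
        \<not> bfs_prec (bfs_label E \<sigma> i (\<sigma> i)) (bfs_label E \<sigma> i y))"

definition leftmost_nbr :: "'a set \<Rightarrow> ('a \<Rightarrow> 'a \<Rightarrow> bool) \<Rightarrow> (nat \<Rightarrow> 'a) \<Rightarrow> 'a \<Rightarrow> 'a" where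
  "leftmost_nbr V E \<sigma> v = \<sigma> (LEAST j. j \<in> {1..card V} \<and> E (\<sigma> j) v)"

definition F_tree :: "'a set \<Rightarrow> ('a \<Rightarrow> 'a \<Rightarrow> bool) \<Rightarrow> (nat \<Rightarrow> 'a) \<Rightarrow> 'a set set" where
  "F_tree V E \<sigma> = {{v, leftmost_nbr V E \<sigma> v} | v. v \<in> V - {\<sigma> 1}}"

definition F_branch_leaf :: "'a set \<Rightarrow> ('a \<Rightarrow> 'a \<Rightarrow> bool) \<Rightarrow> (nat \<Rightarrow> 'a) \<Rightarrow> 'a \<Rightarrow> bool" where
  "F_branch_leaf V E \<sigma> v \<longleftrightarrow> v \<in> V \<and> v \<noteq> \<sigma> 1 \<and> card {e \<in> F_tree V E \<sigma>. v \<in> e} = 1"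

end

theory Submission
  imports Defs
begin


definition ipath :: "'a set \<Rightarrow> ('a \<Rightarrow> 'a \<Rightarrow> bool) \<Rightarrow> 'a list \<Rightarrow> bool" where
  "ipath V E Q \<longleftrightarrow> distinct Q \<and> set Q \<subseteq> V \<and>
     (\<forall>i<length Q. \<forall>j<length Q. E (Q!i) (Q!j) \<longleftrightarrow> (j = Suc i \<or> i = Suc j))"

lemma sg_sym: "simple_graph V E \<Longrightarrow> E x y \<Longrightarrow> E y x"
  by (simp add: simple_graph_def)
lemma sg_irr: "simple_graph V E \<Longrightarrow> \<not> E x x"
  by (simp add: simple_graph_def)
lemma sg_V: "simple_graph V E \<Longrightarrow> E x y \<Longrightarrow> x \<in> V \<and> y \<in> V"
  by (simp add: simple_graph_def)

lemma ipath_single: "x \<in> V \<Longrightarrow> simple_graph V E \<Longrightarrow> ipath V E [x]"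
  by (auto simp: ipath_def sg_irr)

lemma ipath_Cons:
  assumes sg: "simple_graph V E" and Q: "ipath V E Q" "Q \<noteq> []"
    and x: "x \<in> V" "x \<notin> set Q" "E x (hd Q)" "\<forall>y\<in>set (tl Q). \<not> E x y"
  shows "ipath V E (x # Q)"
proof -
  have x': "\<not> E x (Q!k)" if k0: "0 < k" "k < length Q" for k
  proof -
    obtain k' where k': "k = Suc k'" using k0(1) gr0_implies_Suc by blast
    have e: "tl Q ! k' = Q ! k" using k' k0(2) by (simp add: nth_tl)
    have "k' < length (tl Q)" using k' k0(2) by simp
    then have "tl Q ! k' \<in> set (tl Q)" by (rule nth_mem)
    then have "Q!k \<in> set (tl Q)" by (simp only: e)
    then show ?thesis using x(4) by blast
  qed
  have A: "E ((x # Q) ! i) ((x # Q) ! j) \<longleftrightarrow> (j = Suc i \<or> i = Suc j)"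
    if "i < Suc (length Q)" "j < Suc (length Q)" for i j
  proof (cases i)
    case 0
    then show ?thesis
    proof (cases j)
      case 0 then show ?thesis using \<open>i = 0\<close> sg_irr[OF sg] by simp
    next
      case (Suc j')
      then show ?thesis using \<open>i = 0\<close> that x x' Q
        by (cases j') (auto simp: hd_conv_nth)
    qed
  next
    case (Suc i')
    then show ?thesis
    proof (cases j)
      case 0
      have sy: "E a b \<longleftrightarrow> E b a" for a b using sg_sym[OF sg] by blast
      show ?thesis using \<open>i = Suc i'\<close> \<open>j = 0\<close> that x x' Q
        by (cases i') (auto simp: hd_conv_nth sy)
    next
      case (Suc j')
      then show ?thesis using \<open>i = Suc i'\<close> that Q by (auto simp: ipath_def)
    qed
  qed
  have "distinct (x#Q)" using Q x by (simp add: ipath_def)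
  moreover have "set (x#Q) \<subseteq> V" using Q x by (simp add: ipath_def)
  ultimately show ?thesis unfolding ipath_def using A by (simp only: length_Cons) blast
qed

lemma rev_idx: "i < length Q \<Longrightarrow> rev Q!(length Q - Suc i) = Q!i" by (auto simp: rev_nth)
lemma rev_arith: "i < (L::nat) \<Longrightarrow> j < L \<Longrightarrow> (L - Suc j = Suc (L - Suc i) \<or> L - Suc i = Suc (L - Suc j)) \<longleftrightarrow> (j = Suc i \<or> i = Suc j)" by linarith

lemma ipath_rev_aux:
  assumes "ipath V E Q" shows "ipath V E (rev Q)"
proof -
  have B: "\<forall>i<length Q. \<forall>j<length Q. E (Q!i) (Q!j) \<longleftrightarrow> (j = Suc i \<or> i = Suc j)"
    using assms unfolding ipath_def by blast
  have A: "E (rev Q!i) (rev Q!j) \<longleftrightarrow> (j = Suc i \<or> i = Suc j)"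
    if ij: "i < length Q" "j < length Q" for i j
  proof -
    have li: "length Q - Suc i < length Q" "length Q - Suc j < length Q" using ij by auto
    have "E (Q!(length Q - Suc i)) (Q!(length Q - Suc j)) \<longleftrightarrow>
         (length Q - Suc j = Suc (length Q - Suc i) \<or> length Q - Suc i = Suc (length Q - Suc j))"
      using B li by blast
    also have "\<dots> \<longleftrightarrow> (j = Suc i \<or> i = Suc j)" using rev_arith[OF ij] .
    also have "Q!(length Q - Suc i) = rev Q ! i" using rev_idx[of i "rev Q"] ij by simp
    also have "Q!(length Q - Suc j) = rev Q ! j" using rev_idx[of j "rev Q"] ij by simp
    finally show ?thesis .
  qed
  show ?thesis using assms A unfolding ipath_def by simp
qed

lemma ipath_rev: "ipath V E (rev Q) \<longleftrightarrow> ipath V E Q"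
  using ipath_rev_aux[of V E Q] ipath_rev_aux[of V E "rev Q"] by auto

lemma tl_rev': "tl (rev xs) = rev (butlast xs)" by (metis butlast_rev rev_rev_ident)

lemma ipath_snoc:
  assumes sg: "simple_graph V E" and Q: "ipath V E Q" "Q \<noteq> []"
    and x: "x \<in> V" "x \<notin> set Q" "E x (last Q)" "\<forall>y\<in>set (butlast Q). \<not> E x y"
  shows "ipath V E (Q @ [x])"
proof -
  have "ipath V E (x # rev Q)"
    by (rule ipath_Cons) (use sg Q x in \<open>auto simp: ipath_rev hd_rev tl_rev'\<close>)
  then have "ipath V E (rev (x # rev Q))" by (simp only: ipath_rev)
  then show ?thesis by simp
qed

lemma cycle_contra:
  assumes sg: "simple_graph V E" and ch: "chordal V E" and Q: "ipath V E Q" "3 \<le> length Q"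
    and t: "t \<in> V" "t \<notin> set Q" "E t (hd Q)" "E t (last Q)"
      "\<forall>y\<in>set Q. y \<noteq> hd Q \<and> y \<noteq> last Q \<longrightarrow> \<not> E t y"
  shows False
proof -
  define m where "m = length Q"
  define xs where "xs = Q @ [t]"
  have sy: "E a b \<longleftrightarrow> E b a" for a b using sg_sym[OF sg] by blast
  have Qne: "Q \<noteq> []" using Q(2) by auto
  have dQ: "distinct Q" and QV: "set Q \<subseteq> V"
    and QE: "\<And>i j. i < m \<Longrightarrow> j < m \<Longrightarrow> E (Q!i) (Q!j) \<longleftrightarrow> (j = Suc i \<or> i = Suc j)"
    using Q(1) unfolding ipath_def m_def by auto
  have hd0: "hd Q = Q!0" using Qne by (simp add: hd_conv_nth)
  have lastm: "last Q = Q!(m-1)" using Qne by (simp add: last_conv_nth m_def)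
  have tk: "E t (Q!j) \<longleftrightarrow> (j = 0 \<or> j = m - 1)" if "j < m" for j
  proof (cases "j = 0 \<or> j = m - 1")
    case True then show ?thesis using t hd0 lastm by auto
  next
    case False
    have l0: "0 < length Q" "m - 1 < length Q" "j < length Q" using Q(2) that m_def by auto
    have "Q!j \<noteq> Q!0" using False nth_eq_iff_index_eq[OF dQ l0(3) l0(1)] by simp
    moreover have "Q!j \<noteq> Q!(m-1)" using False nth_eq_iff_index_eq[OF dQ l0(3) l0(2)] by simp
    ultimately have "Q!j \<noteq> hd Q" "Q!j \<noteq> last Q" using hd0 lastm by auto
    then show ?thesis using t(5) False that m_def by auto
  qed
  have xsn: "xs ! i = (if i < m then Q!i else t)" if "i < Suc m" for i
    using that by (simp add: xs_def nth_append m_def)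
  have modS: "Suc i mod Suc m = (if i = m then 0 else Suc i)" if "i < Suc m" for i
    using that by auto
  have m3: "3 \<le> m" using Q(2) m_def by simp
  have cyc: "E (xs!i) (xs!j) \<longleftrightarrow> (j = Suc i mod length xs \<or> i = Suc j mod length xs)"
    if ij: "i < length xs" "j < length xs" for i j
  proof -
    have lx: "length xs = Suc m" by (simp add: xs_def m_def)
    have ij': "i < Suc m" "j < Suc m" using ij lx by auto
    show ?thesis
    proof (cases "i < m")
      case True
      show ?thesis
      proof (cases "j < m")
        case True
        then show ?thesis using \<open>i < m\<close> ij' QE xsn modS lx by auto
      next
        case False
        then have "j = m" using ij' by auto
        then show ?thesis using \<open>i < m\<close> ij' xsn modS lx tk[of i] sy m3 by auto
      qed
    next
      case False
      then have "i = m" using ij' by auto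
      show ?thesis
      proof (cases "j < m")
        case True
        then show ?thesis using \<open>i = m\<close> ij' xsn modS lx tk[of j] m3 by auto
      next
        case False
        then have "j = m" using ij' by auto
        then show ?thesis using \<open>i = m\<close> xsn lx sg_irr[OF sg] m3 by auto
      qed
    qed
  qed
  have "induced_cycle V E xs"
    unfolding induced_cycle_def using cyc dQ QV t m3 by (auto simp: xs_def m_def)
  moreover have "length xs \<ge> 4" using m3 by (simp add: xs_def m_def)
  ultimately show False using ch unfolding chordal_def by blast
qed



lemma walk_Cons2: "walk V E (a # b # r) \<Longrightarrow> E a b \<and> walk V E (b # r)"
proof -
  assume w: "walk V E (a # b # r)"
  have "E ((a#b#r)!0) ((a#b#r)!Suc 0)" using w unfolding walk_def by fastforce
  moreover have "E ((b#r)!i) ((b#r)!Suc i)" if "Suc i < length (b#r)" for i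
  proof -
    have "E ((a#b#r)!Suc i) ((a#b#r)!Suc (Suc i))" using w that unfolding walk_def by fastforce
    then show ?thesis by simp
  qed
  ultimately show ?thesis using w unfolding walk_def by auto
qed

lemma walk_cross:
  "walk V E p \<Longrightarrow> hd p \<in> S \<Longrightarrow> last p \<notin> S \<Longrightarrow> \<exists>a b. a \<in> S \<and> b \<notin> S \<and> b \<in> V \<and> E a b"
proof (induction p)
  case Nil then show ?case by (simp add: walk_def)
next
  case (Cons a p)
  show ?case
  proof (cases p)
    case Nil then show ?thesis using Cons.prems by simp
  next
    case (Cons b r)
    have w: "E a b" "walk V E (b # r)" using walk_Cons2[of V E a b r] Cons.prems(1) \<open>p = b # r\<close> by auto
    show ?thesis
    proof (cases "b \<in> S")
      case True
      then show ?thesis using Cons.IH w Cons.prems \<open>p = b # r\<close> by auto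
    next
      case False
      then show ?thesis using w Cons.prems \<open>p = b # r\<close> unfolding walk_def by auto
    qed
  qed
qed

lemma not_prec: "finite B \<Longrightarrow> B \<noteq> {} \<Longrightarrow> \<not> bfs_prec A B \<Longrightarrow> A \<noteq> {} \<and> Min A \<le> Min B"
proof -
  assume "B \<noteq> {}" "\<not> bfs_prec A B"
  then have "A \<noteq> {}" "\<not> Min B < Min A" unfolding bfs_prec_def by auto
  then show ?thesis by (simp add: not_less)
qed

locale bfsg =
  fixes V :: "'a set" and E :: "'a \<Rightarrow> 'a \<Rightarrow> bool" and \<sigma> :: "nat \<Rightarrow> 'a"
  assumes sg: "simple_graph V E" and conn: "connected_graph V E" and bfs: "bfs_ordering V E \<sigma>"
begin

definition pos :: "'a \<Rightarrow> nat" where "pos y = inv_into {1..card V} \<sigma> y"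
definition lp :: "'a \<Rightarrow> nat" where "lp y = (LEAST j. j \<in> {1..card V} \<and> E (\<sigma> j) y)"

lemma bij: "bij_betw \<sigma> {1..card V} V"
  using bfs unfolding bfs_ordering_def vertex_ordering_def by blast

lemma sV: "i \<in> {1..card V} \<Longrightarrow> \<sigma> i \<in> V"
  using bij by (meson bij_betwE)

lemma posV: "y \<in> V \<Longrightarrow> pos y \<in> {1..card V} \<and> \<sigma> (pos y) = y"
  unfolding pos_def using bij
  by (metis bij_betw_def f_inv_into_f inv_into_into)

lemma pos_s: "i \<in> {1..card V} \<Longrightarrow> pos (\<sigma> i) = i"
  unfolding pos_def using bij by (simp add: bij_betw_def)

lemma s_inj: "i \<in> {1..card V} \<Longrightarrow> j \<in> {1..card V} \<Longrightarrow> \<sigma> i = \<sigma> j \<Longrightarrow> i = j"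
  using bij by (metis pos_s)

lemma bfs_cond: "i \<in> {1..card V} \<Longrightarrow> y \<in> V - \<sigma> ` {1..<i} \<Longrightarrow>
   \<not> bfs_prec (bfs_label E \<sigma> i (\<sigma> i)) (bfs_label E \<sigma> i y)"
  using bfs unfolding bfs_ordering_def by blast

lemma label_fin: "finite (bfs_label E \<sigma> i y)"
  unfolding bfs_label_def by (rule finite_subset[of _ "{..<i}"]) auto

lemma unnum: "i \<in> {1..card V} \<Longrightarrow> j \<in> {1..card V} \<Longrightarrow> i \<le> j \<Longrightarrow> \<sigma> j \<in> V - \<sigma> ` {1..<i}"
proof -
  assume a: "i \<in> {1..card V}" "j \<in> {1..card V}" "i \<le> j"
  have "\<sigma> j \<notin> \<sigma> ` {1..<i}"
  proof
    assume "\<sigma> j \<in> \<sigma> ` {1..<i}"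
    then obtain k where k: "k \<in> {1..<i}" "\<sigma> j = \<sigma> k" by blast
    then have "k = j" using s_inj[of k j] a by auto
    then show False using k a by auto
  qed
  then show ?thesis using sV a by auto
qed

lemma B1: assumes i: "2 \<le> i" "i \<le> card V" shows "\<exists>j. 1 \<le> j \<and> j < i \<and> E (\<sigma> j) (\<sigma> i)"
proof -
  define S where "S = \<sigma> ` {1..<i}"
  have i1: "i \<in> {1..card V}" using i by auto
  have s1: "\<sigma> 1 \<in> S" using i unfolding S_def by auto
  have si: "\<sigma> i \<notin> S" using unnum[OF i1 i1] unfolding S_def by auto
  have "\<sigma> 1 \<in> V" "\<sigma> i \<in> V" using sV i by auto
  then obtain p where p: "walk V E p" "hd p = \<sigma> 1" "last p = \<sigma> i"
    using conn unfolding connected_graph_def by blast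
  then obtain a b where ab: "a \<in> S" "b \<notin> S" "b \<in> V" "E a b"
    using walk_cross[of V E p S] s1 si by auto
  obtain k where k: "k \<in> {1..<i}" "a = \<sigma> k" using ab(1) unfolding S_def by blast
  have "k \<in> bfs_label E \<sigma> i b" using k ab unfolding bfs_label_def by auto
  then have "bfs_label E \<sigma> i b \<noteq> {}" by auto
  moreover have "\<not> bfs_prec (bfs_label E \<sigma> i (\<sigma> i)) (bfs_label E \<sigma> i b)"
    using bfs_cond[OF i1] ab unfolding S_def by auto
  ultimately have "bfs_label E \<sigma> i (\<sigma> i) \<noteq> {}" using not_prec label_fin by blast
  then show ?thesis unfolding bfs_label_def by auto
qed

lemma lp_props:
  assumes y: "y \<in> V" "y \<noteq> \<sigma> 1"
  shows "lp y \<in> {1..card V}" "lp y < pos y" "E (\<sigma> (lp y)) y"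
    "\<And>j. j \<in> {1..card V} \<Longrightarrow> E (\<sigma> j) y \<Longrightarrow> lp y \<le> j"
proof -
  have p: "pos y \<in> {1..card V}" "\<sigma> (pos y) = y" using posV y by auto
  have "pos y \<noteq> 1" using p y by auto
  then have "2 \<le> pos y" using p by auto
  then obtain j where j: "1 \<le> j" "j < pos y" "E (\<sigma> j) (\<sigma> (pos y))" using B1[of "pos y"] p(1) by auto
  have jj: "j \<in> {1..card V} \<and> E (\<sigma> j) y" using j p by auto
  have L: "lp y \<in> {1..card V} \<and> E (\<sigma> (lp y)) y" unfolding lp_def by (rule LeastI[of _ j], rule jj)
  have Le: "lp y \<le> j" unfolding lp_def by (rule Least_le, rule jj)
  show "lp y \<in> {1..card V}" "E (\<sigma> (lp y)) y" using L by auto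
  show "lp y < pos y" using Le j by auto
  show "\<And>j. j \<in> {1..card V} \<Longrightarrow> E (\<sigma> j) y \<Longrightarrow> lp y \<le> j"
    unfolding lp_def by (rule Least_le) auto
qed

lemma B2:
  assumes x: "x \<in> V" "x \<noteq> \<sigma> 1" and y: "y \<in> V" "y \<noteq> \<sigma> 1" and xy: "pos x < pos y"
  shows "lp x \<le> lp y"
proof (cases "pos x \<le> lp y")
  case True then show ?thesis using lp_props(2)[OF x] by auto
next
  case False
  define i where "i = pos x"
  have i1: "i \<in> {1..card V}" "\<sigma> i = x" using posV x i_def by auto
  have py: "pos y \<in> {1..card V}" "\<sigma> (pos y) = y" using posV y by auto
  have yu: "y \<in> V - \<sigma> ` {1..<i}" using unnum[OF i1(1) py(1)] py xy i_def by auto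
  have "lp y \<in> bfs_label E \<sigma> i y" using lp_props[OF y] False i_def unfolding bfs_label_def by auto
  then have ne: "bfs_label E \<sigma> i y \<noteq> {}" by auto
  have "\<not> bfs_prec (bfs_label E \<sigma> i (\<sigma> i)) (bfs_label E \<sigma> i y)" using bfs_cond[OF i1(1) yu] .
  then have A: "bfs_label E \<sigma> i x \<noteq> {}" "Min (bfs_label E \<sigma> i x) \<le> Min (bfs_label E \<sigma> i y)"
    using not_prec[OF label_fin ne] i1 by auto
  have "Min (bfs_label E \<sigma> i y) \<le> lp y" using \<open>lp y \<in> bfs_label E \<sigma> i y\<close> label_fin by auto
  moreover have "Min (bfs_label E \<sigma> i x) \<in> bfs_label E \<sigma> i x" using A(1) label_fin by auto
  then have "lp x \<le> Min (bfs_label E \<sigma> i x)"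
    using lp_props(4)[OF x] i1 unfolding bfs_label_def by auto
  ultimately show ?thesis using A by auto
qed

end


context bfsg begin

function levp :: "nat \<Rightarrow> nat" where
  "levp i = (if 2 \<le> i \<and> lp (\<sigma> i) < i then Suc (levp (lp (\<sigma> i))) else 0)"
  by auto
termination by (relation "measure id") auto

declare levp.simps[simp del]

definition lev :: "'a \<Rightarrow> nat" where "lev y = levp (pos y)"
definition T :: "'a \<Rightarrow> 'a" where "T y = \<sigma> (lp y)"

lemma levp_step: assumes "2 \<le> i" "i \<le> card V" shows "levp i = Suc (levp (lp (\<sigma> i)))"
proof -
  have i: "i \<in> {1..card V}" using assms by auto
  have "\<sigma> i \<noteq> \<sigma> 1" using s_inj[of i 1] i assms by auto
  then have "lp (\<sigma> i) < i" using lp_props(2)[of "\<sigma> i"] sV[OF i] pos_s[OF i] by auto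
  then show ?thesis using assms by (subst levp.simps) auto
qed

lemma levp1: "levp (Suc 0) = 0" by (subst levp.simps) auto

lemma T_props: assumes y: "y \<in> V" "y \<noteq> \<sigma> 1"
  shows "T y \<in> V" "E (T y) y" "pos (T y) = lp y" "lev y = Suc (lev (T y))"
proof -
  have l: "lp y \<in> {1..card V}" "lp y < pos y" "E (\<sigma> (lp y)) y" using lp_props[OF y] by auto
  show "T y \<in> V" "E (T y) y" "pos (T y) = lp y" using l sV pos_s unfolding T_def by auto
  have p: "pos y \<in> {1..card V}" "\<sigma> (pos y) = y" using posV y by auto
  have "2 \<le> pos y" using l p by auto
  then have "levp (pos y) = Suc (levp (lp (\<sigma> (pos y))))" using levp_step p by auto
  then show "lev y = Suc (lev (T y))" unfolding lev_def using p pos_s l unfolding T_def by auto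
qed

lemma lev_root: "levp 1 = 0" using levp1 by simp

lemma lev0: assumes "y \<in> V" "lev y = 0" shows "y = \<sigma> 1"
  using T_props(4)[of y] assms by (cases "y = \<sigma> 1") auto

lemma levp_mono: "i \<in> {1..card V} \<Longrightarrow> j \<in> {1..card V} \<Longrightarrow> i \<le> j \<Longrightarrow> levp i \<le> levp j"
proof (induction j arbitrary: i rule: less_induct)
  case (less j)
  show ?case
  proof (cases "i = j")
    case True then show ?thesis by simp
  next
    case False
    show ?thesis
    proof (cases "i = 1")
      case True then show ?thesis using lev_root by simp
    next
      case False
      have ij: "2 \<le> i" "i < j" using False \<open>i \<noteq> j\<close> less.prems by auto
      have si: "\<sigma> i \<in> V" "\<sigma> i \<noteq> \<sigma> 1" using sV s_inj[of i 1] less.prems ij by auto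
      have sj: "\<sigma> j \<in> V" "\<sigma> j \<noteq> \<sigma> 1" using sV s_inj[of j 1] less.prems ij by auto
      have "pos (\<sigma> i) < pos (\<sigma> j)" using pos_s less.prems ij by auto
      then have le: "lp (\<sigma> i) \<le> lp (\<sigma> j)" using B2 si sj by auto
      have lj: "lp (\<sigma> j) < j" "lp (\<sigma> j) \<in> {1..card V}" using lp_props[OF sj] pos_s less.prems by auto
      have li: "lp (\<sigma> i) \<in> {1..card V}" using lp_props[OF si] by auto
      have "levp (lp (\<sigma> i)) \<le> levp (lp (\<sigma> j))" using less.IH[OF lj(1) li lj(2) le] .
      then show ?thesis using levp_step less.prems ij by auto
    qed
  qed
qed

lemma lev_mono: "x \<in> V \<Longrightarrow> y \<in> V \<Longrightarrow> pos x \<le> pos y \<Longrightarrow> lev x \<le> lev y"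
  unfolding lev_def using levp_mono posV by auto

lemma lev_edge: assumes "E x y" shows "lev y \<le> Suc (lev x)"
proof -
  have V: "x \<in> V" "y \<in> V" using assms sg_V[OF sg] by auto
  show ?thesis
  proof (cases "pos y \<le> pos x")
    case True then show ?thesis using lev_mono V by fastforce
  next
    case False
    have "y \<noteq> \<sigma> 1"
    proof
      assume "y = \<sigma> 1"
      then have "pos y = 1" using pos_s[of 1] posV[of x] V by auto
      then show False using False posV V by auto
    qed
    then have "lp y \<le> pos x" using lp_props(4)[of y "pos x"] V posV assms by auto
    then have "lev (T y) \<le> lev x" using lev_mono T_props \<open>y \<noteq> \<sigma> 1\<close> V by metis
    then show ?thesis using T_props(4) \<open>y \<noteq> \<sigma> 1\<close> V by auto
  qed
qed

lemma lev_edge': "E x y \<Longrightarrow> lev x \<le> Suc (lev y)"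
  using lev_edge sg_sym[OF sg] by blast

end


lemma last_not_butlast: "distinct xs \<Longrightarrow> xs \<noteq> [] \<Longrightarrow> last xs \<notin> set (butlast xs)"
  by (metis append_butlast_last_id distinct_append disjoint_iff list.set_intros(1))

lemma hd_not_tl: "distinct xs \<Longrightarrow> xs \<noteq> [] \<Longrightarrow> hd xs \<notin> set (tl xs)"
  by (cases xs) auto

lemma hd_ne_last: "distinct xs \<Longrightarrow> 2 \<le> length xs \<Longrightarrow> hd xs \<noteq> last xs"
  by (cases xs) (auto simp: last_in_set)

lemma ipath_props: "ipath V E Q \<Longrightarrow> distinct Q \<and> set Q \<subseteq> V"
  unfolding ipath_def by auto

locale cbfs = bfsg + assumes ch: "chordal V E"
begin

lemma lev_root': "y \<in> V \<Longrightarrow> lev (\<sigma> 1) = 0"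
  unfolding lev_def using pos_s[of 1] posV[of y] lev_root by auto

lemma core:
  "lev a = k \<Longrightarrow> lev b = k \<Longrightarrow> ipath V E Q \<Longrightarrow> 3 \<le> length Q \<Longrightarrow> hd Q = b \<Longrightarrow> last Q = a \<Longrightarrow>
   (\<forall>y\<in>set Q. y \<noteq> a \<and> y \<noteq> b \<longrightarrow> k < lev y) \<Longrightarrow> False"
proof (induction k arbitrary: a b Q)
  case 0
  have Qne: "Q \<noteq> []" using "0.prems" by auto
  have d: "distinct Q" "set Q \<subseteq> V" using ipath_props "0.prems" by auto
  have ab: "a \<in> V" "b \<in> V" using d Qne "0.prems" by (auto simp: last_in_set)
  have "a = \<sigma> 1" using lev0[OF ab(1)] "0.prems"(1) by auto
  moreover have "b = \<sigma> 1" using lev0[OF ab(2)] "0.prems"(2) by auto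
  moreover have "hd Q \<noteq> last Q" using hd_ne_last[OF d(1)] "0.prems"(4) by auto
  ultimately show False using "0.prems" by auto
next
  case (Suc k)
  have Qne: "Q \<noteq> []" using Suc.prems by auto
  have d: "distinct Q" "set Q \<subseteq> V" using ipath_props Suc.prems by auto
  have ab: "a \<in> V" "b \<in> V" "a \<in> set Q" "b \<in> set Q" using d Qne Suc.prems by (auto simp: last_in_set)
  have anr: "a \<noteq> \<sigma> 1" "b \<noteq> \<sigma> 1" using lev_root'[of a] ab Suc.prems by auto
  define ta where "ta = T a"
  define tb where "tb = T b"
  have ta: "ta \<in> V" "E ta a" "lev ta = k" using T_props[OF ab(1) anr(1)] Suc.prems unfolding ta_def by auto
  have tb: "tb \<in> V" "E tb b" "lev tb = k" using T_props[OF ab(2) anr(2)] Suc.prems unfolding tb_def by auto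
  have levQ: "Suc k \<le> lev y" if "y \<in> set Q" for y using that Suc.prems by fastforce
  have taQ: "ta \<notin> set Q" using levQ ta by fastforce
  have tbQ: "tb \<notin> set Q" using levQ tb by fastforce
  have intr: "\<not> E t y" if "y \<in> set Q" "y \<noteq> a" "y \<noteq> b" "lev t = k" for t y
  proof
    assume "E t y"
    then have "lev y \<le> Suc k" using lev_edge that by fastforce
    then show False using that Suc.prems by fastforce
  qed
  have sy: "E u w \<longleftrightarrow> E w u" for u w using sg_sym[OF sg] by blast
  have len: "3 \<le> length Q" using Suc.prems by auto
  show False
  proof (cases "ta = tb")
    case True
    show False
      by (rule cycle_contra[OF sg ch Suc.prems(3) len ta(1) taQ])
        (use Suc.prems ta tb True intr in auto)
  next
    case ne: False
    show False
    proof (cases "E tb a")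
      case True
      show False
        by (rule cycle_contra[OF sg ch Suc.prems(3) len tb(1) tbQ])
          (use Suc.prems ta tb True intr in auto)
    next
      case nba: False
      show False
      proof (cases "E ta b")
        case True
        show False
          by (rule cycle_contra[OF sg ch Suc.prems(3) len ta(1) taQ])
            (use Suc.prems ta tb True intr in auto)
      next
        case nab: False
        have but: "y \<in> set Q \<and> y \<noteq> a" if "y \<in> set (butlast Q)" for y
          using that last_not_butlast[OF d(1) Qne] Suc.prems in_set_butlastD by fastforce
        have Q2: "ipath V E (Q @ [ta])"
          by (rule ipath_snoc[OF sg Suc.prems(3) Qne ta(1) taQ])
            (use Suc.prems ta nab intr but in \<open>auto simp: sy\<close>)
        show False
        proof (cases "E ta tb")
          case True
          show False
            by (rule cycle_contra[OF sg ch Q2 _ tb(1)])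
              (use Suc.prems ta tb True intr ne tbQ nba Qne in \<open>auto simp: sy\<close>)
        next
          case False
          have tl2: "y \<in> set Q \<and> y \<noteq> b \<or> y = ta" if "y \<in> set (tl (Q @ [ta]))" for y
            using that hd_not_tl[OF d(1) Qne] Suc.prems Qne by (cases Q) auto
          have Q3: "ipath V E (tb # (Q @ [ta]))"
            by (rule ipath_Cons[OF sg Q2])
              (use Suc.prems ta tb False intr ne tbQ nba Qne tl2 in \<open>auto simp: sy\<close>)
          show False
            by (rule Suc.IH[OF ta(3) tb(3) Q3])
              (use Suc.prems levQ len in auto)
        qed
      qed
    qed
  qed
qed

end


lemma ipC: "simple_graph V E \<Longrightarrow> ipath V E (y # r) \<Longrightarrow> x \<in> V \<Longrightarrow> x \<notin> set (y # r) \<Longrightarrow> E x y \<Longrightarrow>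
   (\<forall>z\<in>set r. \<not> E x z) \<Longrightarrow> ipath V E (x # y # r)"
  using ipath_Cons[of V E "y # r" x] by auto

context cbfs begin

lemma inV: "E x y \<Longrightarrow> x \<in> V \<and> y \<in> V" using sg_V[OF sg] by blast

lemma L1:
  assumes "E a y" "E b y" "lev a = lev b" "lev y = Suc (lev a)" "a \<noteq> b"
  shows "E a b"
proof (rule ccontr)
  assume nab: "\<not> E a b"
  have V: "a \<in> V" "b \<in> V" "y \<in> V" using inV assms by auto
  have sy: "E u w \<longleftrightarrow> E w u" for u w using sg_sym[OF sg] by blast
  have ne: "y \<noteq> a" "y \<noteq> b" using assms by auto
  have Q: "ipath V E [b, y, a]"
    by (intro ipC ipath_single) (use sg V ne assms nab in \<open>auto simp: sy\<close>)
  show False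
    by (rule core[OF assms(3) refl Q]) (use assms in auto)
qed

lemma L2:
  assumes yz: "E y z" "lev y = lev z"
  shows "\<exists>c. E c y \<and> E c z \<and> Suc (lev c) = lev y"
proof -
  have V: "y \<in> V" "z \<in> V" using inV yz by auto
  have sy: "E u w \<longleftrightarrow> E w u" for u w using sg_sym[OF sg] by blast
  have yz_ne: "y \<noteq> z" using yz sg_irr[OF sg] by auto
  have nr: "y \<noteq> \<sigma> 1" "z \<noteq> \<sigma> 1"
  proof -
    have "lev (\<sigma> 1) = 0" using lev_root' V by auto
    then show "y \<noteq> \<sigma> 1" "z \<noteq> \<sigma> 1" using lev0 V yz yz_ne by metis+
  qed
  define ty where "ty = T y"
  define tz where "tz = T z"
  have ty: "ty \<in> V" "E ty y" "Suc (lev ty) = lev y" using T_props[OF V(1) nr(1)] unfolding ty_def by auto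
  have tz: "tz \<in> V" "E tz z" "Suc (lev tz) = lev y" using T_props[OF V(2) nr(2)] yz unfolding tz_def by auto
  show ?thesis
  proof (rule ccontr)
    assume nc: "\<not> ?thesis"
    have n1: "\<not> E ty z" using nc ty by auto
    have n2: "\<not> E tz y" using nc tz by auto
    have n3: "ty \<noteq> tz" using nc ty tz by auto
    have dl: "ty \<noteq> y" "ty \<noteq> z" "tz \<noteq> y" "tz \<noteq> z" using ty tz yz by auto
    show False
    proof (cases "E ty tz")
      case True
      have Q: "ipath V E [y, z, tz]"
        by (intro ipC ipath_single) (use sg V ty tz dl yz n2 yz_ne in \<open>auto simp: sy\<close>)
      show False
        by (rule cycle_contra[OF sg ch Q _ ty(1)]) (use dl n3 ty True n1 yz_ne in \<open>auto simp: sy\<close>)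
    next
      case False
      have Q: "ipath V E [tz, z, y, ty]"
        by (intro ipC ipath_single) (use sg V ty tz dl yz n1 n2 n3 False yz_ne in \<open>auto simp: sy\<close>)
      show False
        by (rule core[of ty "lev ty" tz, OF refl _ Q]) (use ty tz yz in auto)
    qed
  qed
qed

lemma center:
  assumes v: "v \<in> V" "v \<noteq> \<sigma> 1" and leaf: "\<forall>w\<in>V. w \<noteq> \<sigma> 1 \<longrightarrow> T w \<noteq> v"
    and x: "E v x"
  shows "x = T v \<or> E (T v) x \<or> (\<exists>y. E v y \<and> E (T v) y \<and> E y x)"
proof -
  define p where "p = T v"
  have sy: "E u w \<longleftrightarrow> E w u" for u w using sg_sym[OF sg] by blast
  have p: "p \<in> V" "E p v" "lev v = Suc (lev p)" "pos p = lp v" using T_props[OF v] unfolding p_def by auto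
  have xV: "x \<in> V" using inV x by auto
  have l1: "lev x \<le> Suc (lev v)" using lev_edge x by auto
  have l2: "lev v \<le> Suc (lev x)" using lev_edge' x by auto
  consider "lev x = lev p" | "lev x = lev v" | "lev x = Suc (lev v)" using l1 l2 p by linarith
  then have "x = p \<or> E p x \<or> (\<exists>y. E v y \<and> E p y \<and> E y x)"
  proof cases
    case 1
    show ?thesis using L1[of x v p] x p 1 by (auto simp: sy)
  next
    case 2
    obtain c where c: "E c v" "E c x" "Suc (lev c) = lev v" using L2[of v x] x 2 by auto
    show ?thesis
    proof (cases "c = p")
      case True then show ?thesis using c by auto
    next
      case False
      have "E c p" using L1[of c v p] c p False by auto
      then show ?thesis using c by (auto simp: sy)
    qed
  next
    case 3
    have xr: "x \<noteq> \<sigma> 1" using 3 lev_root' xV by auto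
    define r where "r = T x"
    have r: "r \<in> V" "E r x" "lev x = Suc (lev r)" "pos r = lp x" using T_props[OF xV xr] unfolding r_def by auto
    have rv: "r \<noteq> v" using leaf xV xr unfolding r_def by auto
    have lrv: "lev r = lev v" using r 3 by auto
    have Erv: "E r v" using L1[of r x v] r x lrv rv by (auto simp: sy)
    have "lp x \<le> pos v" using lp_props(4)[OF xV xr, of "pos v"] posV[OF v(1)] x by (auto simp: sy)
    moreover have "lp x \<noteq> pos v" using rv posV[OF v(1)] unfolding r_def T_def by auto
    ultimately have prv: "pos r < pos v" using r by auto
    have rnr: "r \<noteq> \<sigma> 1" using lrv p lev_root' v by auto
    have "E p r"
    proof (rule ccontr)
      assume npr: "\<not> E p r"
      define q where "q = T r"
      have q: "q \<in> V" "E q r" "lev r = Suc (lev q)" "pos q = lp r" using T_props[OF r(1) rnr] unfolding q_def by auto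
      have "lp r \<le> lp v" using B2[OF r(1) rnr v prv] .
      moreover have "q \<noteq> p" using npr q by auto
      then have "lp r \<noteq> lp v" unfolding q_def p_def T_def by auto
      ultimately have lt: "lp r < lp v" by auto
      have nqv: "\<not> E q v"
      proof
        assume "E q v"
        then have "lp v \<le> pos q" using lp_props(4)[OF v, of "pos q"] posV[OF q(1)] by auto
        then show False using lt q by auto
      qed
      have lq: "lev q = lev p" using q lrv p by auto
      have dd: "p \<noteq> v" "p \<noteq> r" "q \<noteq> v" "q \<noteq> r" "v \<noteq> r" using p q lrv rv by auto
      show False
      proof (cases "E q p")
        case True
        have Q: "ipath V E [p, v, r]"
          by (intro ipC ipath_single) (use sg v p r dd Erv npr in \<open>auto simp: sy\<close>)
        show False
          by (rule cycle_contra[OF sg ch Q _ q(1)]) (use dd True q nqv \<open>q \<noteq> p\<close> in \<open>auto simp: sy\<close>)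
      next
        case False
        have Q: "ipath V E [p, v, r, q]"
          by (intro ipC ipath_single) (use sg v p r q dd Erv npr nqv False \<open>q \<noteq> p\<close> in \<open>auto simp: sy\<close>)
        show False
          by (rule core[of q "lev q" p, OF refl _ Q]) (use lq p lrv q in auto)
      qed
    qed
    then show ?thesis using Erv r by (auto simp: sy)
  qed
  then show ?thesis unfolding p_def .
qed

end


definition sigL :: "'a list \<Rightarrow> nat \<Rightarrow> 'a" where "sigL L i = L ! (i - 1)"

definition valid_at :: "'a set \<Rightarrow> ('a \<Rightarrow> 'a \<Rightarrow> bool) \<Rightarrow> 'a list \<Rightarrow> nat \<Rightarrow> bool" where
  "valid_at V E L i \<longleftrightarrow> (\<forall>y \<in> V - sigL L ` {1..<i}.
     \<not> bfs_prec (bfs_label E (sigL L) i (sigL L i)) (bfs_label E (sigL L) i y))"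

definition goodpre :: "'a set \<Rightarrow> ('a \<Rightarrow> 'a \<Rightarrow> bool) \<Rightarrow> 'a list \<Rightarrow> bool" where
  "goodpre V E L \<longleftrightarrow> distinct L \<and> set L \<subseteq> V \<and> (\<forall>i\<in>{1..length L}. valid_at V E L i)"

lemma sigL_app: "1 \<le> i \<Longrightarrow> i \<le> length L \<Longrightarrow> sigL (L @ M) i = sigL L i"
proof -
  assume "1 \<le> i" "i \<le> length L"
  then have "i - 1 < length L" by auto
  then show ?thesis unfolding sigL_def by (simp add: nth_append)
qed

lemma label_app: "i \<le> Suc (length L) \<Longrightarrow> bfs_label E (sigL (L @ M)) i y = bfs_label E (sigL L) i y"
proof -
  assume i: "i \<le> Suc (length L)"
  have "sigL (L @ M) j = sigL L j" if "1 \<le> j" "j < i" for j using sigL_app[of j L M] that i by auto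
  then show ?thesis unfolding bfs_label_def by auto
qed

lemma img_app: "i \<le> Suc (length L) \<Longrightarrow> sigL (L @ M) ` {1..<i} = sigL L ` {1..<i}"
proof -
  assume i: "i \<le> Suc (length L)"
  have "sigL (L @ M) j = sigL L j" if "j \<in> {1..<i}" for j using sigL_app[of j L M] that i by auto
  then show ?thesis by (rule image_cong[OF refl])
qed

lemma img_set: "sigL L ` {1..<Suc (length L)} = set L"
proof
  show "sigL L ` {1..<Suc (length L)} \<subseteq> set L" unfolding sigL_def by auto
  show "set L \<subseteq> sigL L ` {1..<Suc (length L)}"
  proof
    fix x assume "x \<in> set L"
    then obtain k where k: "k < length L" "L ! k = x" by (auto simp: in_set_conv_nth)
    then have "sigL L (Suc k) = x" "Suc k \<in> {1..<Suc (length L)}" unfolding sigL_def by auto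
    then show "x \<in> sigL L ` {1..<Suc (length L)}" by force
  qed
qed

lemma valid_app: "1 \<le> i \<Longrightarrow> i \<le> length L \<Longrightarrow> valid_at V E (L @ M) i \<longleftrightarrow> valid_at V E L i"
  unfolding valid_at_def using sigL_app[of i L M] label_app[of i L E M] img_app[of i L M] by simp

lemma extend1:
  assumes g: "goodpre V E L" and f: "finite V" and l: "length L < card V"
  shows "\<exists>y. goodpre V E (L @ [y])"
proof -
  define R where "R = V - set L"
  have "card (set L) = length L" using g distinct_card unfolding goodpre_def by blast
  moreover have "set L \<subseteq> V" using g unfolding goodpre_def by auto
  ultimately have "R \<noteq> {}" using l f card_mono[OF f, of "set L"] unfolding R_def
    by (metis Diff_eq_empty_iff card_mono leD subset_antisym)
  have fR: "finite R" using f R_def by auto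
  define i where "i = Suc (length L)"
  define lab where "lab y = bfs_label E (sigL L) i y" for y
  define key where "key y = (if lab y = {} then i else Min (lab y))" for y
  have labfin: "finite (lab y)" for y unfolding lab_def bfs_label_def
    by (rule finite_subset[of _ "{..<i}"]) auto
  have labless: "j \<in> lab y \<Longrightarrow> 1 \<le> j \<and> j < i" for j y unfolding lab_def bfs_label_def by auto
  obtain y0 where y0: "y0 \<in> R" "\<forall>y\<in>R. key y0 \<le> key y"
  proof -
    have "Min (key ` R) \<in> key ` R" using fR \<open>R \<noteq> {}\<close> by auto
    then obtain y0 where "y0 \<in> R" "key y0 = Min (key ` R)" by auto
    moreover have "\<forall>y\<in>R. Min (key ` R) \<le> key y" using fR by auto
    ultimately show ?thesis using that by auto
  qed
  have V_at: "valid_at V E (L @ [y0]) i"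
    unfolding valid_at_def
  proof
    fix y assume y: "y \<in> V - sigL (L @ [y0]) ` {1..<i}"
    have yR: "y \<in> R" using y img_app[of i L "[y0]"] img_set[of L] unfolding i_def R_def by auto
    have s0: "sigL (L @ [y0]) i = y0" unfolding sigL_def i_def by simp
    have lab_eq: "bfs_label E (sigL (L @ [y0])) i z = lab z" for z
      unfolding lab_def using label_app[of i L E "[y0]"] i_def by auto
    show "\<not> bfs_prec (bfs_label E (sigL (L @ [y0])) i (sigL (L @ [y0]) i)) (bfs_label E (sigL (L @ [y0])) i y)"
      unfolding s0 lab_eq
    proof
      assume pr: "bfs_prec (lab y0) (lab y)"
      then have ne: "lab y \<noteq> {}" unfolding bfs_prec_def by auto
      then have "Min (lab y) \<in> lab y" using labfin by auto
      then have ky: "key y < i" using ne labless unfolding key_def by auto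
      have "key y0 \<le> key y" using y0 yR by auto
      then have ne0: "lab y0 \<noteq> {}" using ky unfolding key_def by (auto split: if_splits)
      have "Min (lab y0) \<le> Min (lab y)" using \<open>key y0 \<le> key y\<close> ne ne0 unfolding key_def by auto
      then show False using pr ne ne0 unfolding bfs_prec_def by auto
    qed
  qed
  have "goodpre V E (L @ [y0])"
    unfolding goodpre_def
  proof (intro conjI ballI)
    show "distinct (L @ [y0])" using g y0 R_def unfolding goodpre_def by auto
    show "set (L @ [y0]) \<subseteq> V" using g y0 R_def unfolding goodpre_def by auto
    fix j assume j: "j \<in> {1..length (L @ [y0])}"
    show "valid_at V E (L @ [y0]) j"
    proof (cases "j \<le> length L")
      case True
      then show ?thesis using valid_app[of j L V E "[y0]"] g j unfolding goodpre_def by auto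
    next
      case False
      then have "j = i" using j i_def by auto
      then show ?thesis using V_at by simp
    qed
  qed
  then show ?thesis by blast
qed

lemma extend_all:
  assumes "finite V"
  shows "goodpre V E L \<Longrightarrow> length L \<le> card V \<Longrightarrow> \<exists>M. goodpre V E (L @ M) \<and> length (L @ M) = card V"
proof (induction "card V - length L" arbitrary: L)
  case 0
  then show ?case by (intro exI[of _ "[]"]) auto
next
  case (Suc k)
  obtain y where y: "goodpre V E (L @ [y])" using extend1[OF Suc.prems(1) assms] Suc.hyps by fastforce
  have "k = card V - length (L @ [y])" using Suc.hyps by auto
  moreover have "length (L @ [y]) \<le> card V" using Suc.hyps by auto
  ultimately obtain M where "goodpre V E ((L @ [y]) @ M) \<and> length ((L @ [y]) @ M) = card V"
    using Suc.hyps(1) y by blast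
  then show ?case by (intro exI[of _ "y # M"]) auto
qed

lemma goodpre_bfs:
  assumes f: "finite V" and g: "goodpre V E L" and l: "length L = card V"
  shows "bfs_ordering V E (sigL L)"
proof -
  have d: "distinct L" "set L \<subseteq> V" using g unfolding goodpre_def by auto
  have "card (set L) = card V" using distinct_card[OF d(1)] l by simp
  then have sL: "set L = V" using d(2) f by (simp add: card_subset_eq)
  have inj: "inj_on (sigL L) {1..card V}"
  proof
    fix i j assume ij: "i \<in> {1..card V}" "j \<in> {1..card V}" "sigL L i = sigL L j"
    then have "L ! (i - 1) = L ! (j - 1)" unfolding sigL_def by simp
    then have "i - 1 = j - 1" using nth_eq_iff_index_eq[OF d(1)] ij l by auto
    then show "i = j" using ij by auto
  qed
  have "sigL L ` {1..card V} = V" using img_set[of L] sL l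
    by (metis atLeastLessThanSuc_atLeastAtMost)
  then have "vertex_ordering V (sigL L)" unfolding vertex_ordering_def bij_betw_def using inj by auto
  moreover have "\<forall>i\<in>{1..card V}. valid_at V E L i" using g l unfolding goodpre_def by auto
  ultimately show ?thesis unfolding bfs_ordering_def valid_at_def by auto
qed

lemma init_good:
  assumes sg: "simple_graph V E" and c: "c \<in> V" and v: "E c v"
    and cs: "distinct cs" "set cs = nbhd E c - {v}"
  shows "goodpre V E (c # cs @ [v])"
proof -
  define L where "L = c # cs @ [v]"
  have nb: "\<And>x. x \<in> set (cs @ [v]) \<Longrightarrow> E c x" using cs v unfolding nbhd_def by auto
  have "distinct L" unfolding L_def using cs nb sg_irr[OF sg] by auto
  moreover have "set L \<subseteq> V"
  proof -
    have "\<forall>x\<in>set (cs @ [v]). x \<in> V" using nb sg_V[OF sg] by blast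
    then show ?thesis unfolding L_def using c by auto
  qed
  moreover have "valid_at V E L i" if i: "i \<in> {1..length L}" for i
  proof (cases "i = 1")
    case True
    then show ?thesis unfolding valid_at_def bfs_prec_def bfs_label_def by auto
  next
    case False
    obtain k where k: "i = Suc (Suc k)" using i False by (cases i; cases "i - 1") auto
    have "k < length (cs @ [v])" using i k unfolding L_def by auto
    then have "(cs @ [v]) ! k \<in> set (cs @ [v])" by (rule nth_mem)
    then have "sigL L i \<in> set (cs @ [v])" unfolding sigL_def L_def k by (simp only: diff_Suc_1 nth_Cons_Suc)
    then have "E (sigL L 1) (sigL L i)" using nb unfolding sigL_def L_def by auto
    then have one: "1 \<in> bfs_label E (sigL L) i (sigL L i)" using i False unfolding bfs_label_def by auto
    have lfin: "finite (bfs_label E (sigL L) i y)" for y unfolding bfs_label_def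
      by (rule finite_subset[of _ "{..<i}"]) auto
    have m1: "Min (bfs_label E (sigL L) i (sigL L i)) = 1"
      by (rule Min_eqI[OF lfin _ one]) (auto simp: bfs_label_def)
    have "1 \<le> Min (bfs_label E (sigL L) i y)" if "bfs_label E (sigL L) i y \<noteq> {}" for y
      using that lfin unfolding bfs_label_def by auto
    then show ?thesis unfolding valid_at_def bfs_prec_def using m1 one by force
  qed
  ultimately show ?thesis unfolding goodpre_def L_def by auto
qed



lemma Inf_enat_in: "(A::enat set) \<noteq> {} \<Longrightarrow> Inf A \<in> A"
  unfolding Inf_enat_def by (auto intro: LeastI)

lemma gdist_le: "walk W F p \<Longrightarrow> hd p = u \<Longrightarrow> last p = w \<Longrightarrow> gdist W F u w \<le> enat (length p - 1)"
  unfolding gdist_def by (rule INF_lower) auto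

lemma gdist_2:
  assumes "gdist W F u w \<le> 2"
  shows "\<exists>p. walk W F p \<and> hd p = u \<and> last p = w \<and> length p \<le> 3"
proof -
  define S where "S = {p. walk W F p \<and> hd p = u \<and> last p = w}"
  have g: "gdist W F u w = Inf ((\<lambda>p. enat (length p - 1)) ` S)" unfolding gdist_def S_def by simp
  have "S \<noteq> {}"
  proof
    assume "S = {}"
    then have "gdist W F u w = \<infinity>" using g by (simp add: Inf_enat_def)
    then show False using assms by simp
  qed
  then have "Inf ((\<lambda>p. enat (length p - 1)) ` S) \<in> (\<lambda>p. enat (length p - 1)) ` S" by (intro Inf_enat_in) auto
  then obtain p where p: "p \<in> S" "enat (length p - 1) = gdist W F u w" using g by auto
  then have "enat (length p - 1) \<le> 2" using assms by simp
  then have "length p - 1 \<le> 2" by (simp add: numeral_eq_enat)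
  then show ?thesis using p unfolding S_def by auto
qed

lemma short_walk:
  assumes "walk W F p" "hd p = u" "last p = w" "length p \<le> 3"
  shows "u = w \<or> F u w \<or> (\<exists>y. F u y \<and> F y w)"
proof -
  have ne: "p \<noteq> []" using assms walk_def by auto
  have e: "F (p!i) (p!Suc i)" if "Suc i < length p" for i using assms that unfolding walk_def by auto
  have "0 < length p" using ne by simp
  then have "length p = 1 \<or> length p = 2 \<or> length p = 3" using assms(4) by presburger
  then consider "length p = 1" | "length p = 2" | "length p = 3" by blast
  then show ?thesis
  proof cases
    case 1
    then obtain a where "p = [a]" by (cases p) auto
    then show ?thesis using assms by auto
  next
    case 2
    then obtain a b where "p = [a, b]" by (cases p; cases "tl p") auto
    then show ?thesis using assms e[of 0] by auto
  next
    case 3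
    then obtain a b c where "p = [a, b, c]" by (cases p; cases "tl p"; cases "tl (tl p)") auto
    then show ?thesis using assms e[of 0] e[of 1] by auto
  qed
qed

lemma gdist_le2: "walk W F p \<Longrightarrow> hd p = u \<Longrightarrow> last p = w \<Longrightarrow> length p \<le> 3 \<Longrightarrow> gdist W F u w \<le> 2"
proof -
  assume a: "walk W F p" "hd p = u" "last p = w" "length p \<le> 3"
  have "enat (length p - 1) \<le> 2" using a(4) by (simp add: numeral_eq_enat)
  then show ?thesis using gdist_le[OF a(1-3)] by (rule order_trans[rotated])
qed

lemma walk1: "x \<in> W \<Longrightarrow> walk W F [x]" unfolding walk_def by auto
lemma walk2: "x \<in> W \<Longrightarrow> y \<in> W \<Longrightarrow> F x y \<Longrightarrow> walk W F [x, y]" unfolding walk_def by auto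
lemma walk3: "x \<in> W \<Longrightarrow> y \<in> W \<Longrightarrow> z \<in> W \<Longrightarrow> F x y \<Longrightarrow> F y z \<Longrightarrow> walk W F [x, y, z]"
  unfolding walk_def by (auto simp: less_Suc_eq nth_Cons split: nat.splits)

lemma rad_get:
  assumes "radius W F \<le> 2"
  shows "\<exists>c\<in>W. \<forall>w\<in>W. gdist W F c w \<le> 2"
proof -
  have "W \<noteq> {}"
  proof
    assume "W = {}"
    then have "radius W F = \<infinity>" unfolding radius_def by (simp add: Inf_enat_def)
    then show False using assms by simp
  qed
  then have "Inf (ecc W F ` W) \<in> ecc W F ` W" by (intro Inf_enat_in) auto
  then obtain c where c: "c \<in> W" "ecc W F c \<le> 2" using assms unfolding radius_def by auto
  then show ?thesis unfolding ecc_def by (auto simp: SUP_le_iff)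
qed

lemma rad_put:
  assumes "c \<in> W" "\<forall>w\<in>W. gdist W F c w \<le> 2"
  shows "radius W F \<le> 2"
proof -
  have "ecc W F c \<le> 2" unfolding ecc_def using assms by (auto intro: SUP_least)
  then show ?thesis unfolding radius_def using assms(1) by (auto intro: INF_lower2)
qed

context bfsg begin

lemma lm_T: "leftmost_nbr V E \<sigma> w = T w"
  unfolding leftmost_nbr_def T_def lp_def by simp

lemma leaf_iff:
  assumes v: "v \<in> V" "v \<noteq> \<sigma> 1"
  shows "F_branch_leaf V E \<sigma> v \<longleftrightarrow> (\<forall>w\<in>V. w \<noteq> \<sigma> 1 \<longrightarrow> T w \<noteq> v)"
proof -
  have FT: "F_tree V E \<sigma> = {{w, T w} | w. w \<in> V - {\<sigma> 1}}" unfolding F_tree_def lm_T by simp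
  define A where "A = {e \<in> F_tree V E \<sigma>. v \<in> e}"
  have vA: "{v, T v} \<in> A" unfolding A_def FT using v by auto
  show ?thesis
  proof
    assume "F_branch_leaf V E \<sigma> v"
    then have "card A = 1" unfolding F_branch_leaf_def A_def by auto
    then obtain e where e: "A = {e}" by (rule card_1_singletonE)
    show "\<forall>w\<in>V. w \<noteq> \<sigma> 1 \<longrightarrow> T w \<noteq> v"
    proof (intro ballI impI notI)
      fix w assume w: "w \<in> V" "w \<noteq> \<sigma> 1" "T w = v"
      have "{w, T w} \<in> A" unfolding A_def FT using w by auto
      then have eq: "{w, v} = {v, T v}" using vA e w by auto
      have "w \<noteq> v" using T_props(2)[OF w(1,2)] w sg_irr[OF sg] by auto
      then have "w = T v" using eq by (auto simp: doubleton_eq_iff)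
      have "pos (T v) < pos v" using T_props(3)[OF v] lp_props(2)[OF v] by auto
      moreover have "pos (T w) < pos w" using T_props(3)[OF w(1,2)] lp_props(2)[OF w(1,2)] by auto
      ultimately show False using \<open>w = T v\<close> w by auto
    qed
  next
    assume nl: "\<forall>w\<in>V. w \<noteq> \<sigma> 1 \<longrightarrow> T w \<noteq> v"
    have "A = {{v, T v}}"
    proof
      show "A \<subseteq> {{v, T v}}"
      proof
        fix e assume "e \<in> A"
        then obtain w where w: "e = {w, T w}" "w \<in> V" "w \<noteq> \<sigma> 1" "v \<in> e" unfolding A_def FT by auto
        then have "w = v" using nl by auto
        then show "e \<in> {{v, T v}}" using w by auto
      qed
      show "{{v, T v}} \<subseteq> A" using vA by auto
    qed
    then show "F_branch_leaf V E \<sigma> v" unfolding F_branch_leaf_def A_def using v by auto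
  qed
qed

end

theorem theorem13:
  fixes V :: "'a set" and E :: "'a \<Rightarrow> 'a \<Rightarrow> bool" and v :: 'a
  assumes "simple_graph V E" and "connected_graph V E" and "chordal V E"
    and "card V \<ge> 2" and "v \<in> V"
  shows "(\<exists>\<sigma>. bfs_ordering V E \<sigma> \<and> F_branch_leaf V E \<sigma> v)
         \<longleftrightarrow> radius (nbhd E v) (induced_adj E (nbhd E v)) \<le> 2"
proof
  assume "\<exists>\<sigma>. bfs_ordering V E \<sigma> \<and> F_branch_leaf V E \<sigma> v"
  then obtain \<sigma> where s: "bfs_ordering V E \<sigma>" "F_branch_leaf V E \<sigma> v" by blast
  interpret cbfs V E \<sigma> using assms s by unfold_locales auto
  have sy: "E a b \<longleftrightarrow> E b a" for a b using sg_sym[OF sg] by blast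
  have vr: "v \<noteq> \<sigma> 1" using s unfolding F_branch_leaf_def by auto
  have nl: "\<forall>w\<in>V. w \<noteq> \<sigma> 1 \<longrightarrow> T w \<noteq> v" using leaf_iff[OF assms(5) vr] s by auto
  define W where "W = nbhd E v"
  define F where "F = induced_adj E W"
  have pW: "T v \<in> W" using T_props(2)[OF assms(5) vr] unfolding W_def nbhd_def by (simp add: sy)
  have "gdist W F (T v) x \<le> 2" if x: "x \<in> W" for x
  proof -
    have Evx: "E v x" using x unfolding W_def nbhd_def by simp
    consider "x = T v" | "E (T v) x" | y where "E v y" "E (T v) y" "E y x"
      using center[OF assms(5) vr nl Evx] by blast
    then show ?thesis
    proof cases
      case 1
      then show ?thesis using gdist_le2[OF walk1[OF pW, of F]] by simp
    next
      case 2
      have "walk W F [T v, x]" by (rule walk2) (use pW x 2 in \<open>auto simp: F_def induced_adj_def\<close>)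
      then show ?thesis using gdist_le2[of W F "[T v, x]"] by simp
    next
      case 3
      have yW: "y \<in> W" using 3 unfolding W_def nbhd_def by simp
      have "walk W F [T v, y, x]" by (rule walk3) (use pW x yW 3 in \<open>auto simp: F_def induced_adj_def\<close>)
      then show ?thesis using gdist_le2[of W F "[T v, y, x]"] by simp
    qed
  qed
  then show "radius (nbhd E v) (induced_adj E (nbhd E v)) \<le> 2"
    using rad_put[OF pW] unfolding W_def F_def by auto
next
  assume r: "radius (nbhd E v) (induced_adj E (nbhd E v)) \<le> 2"
  have sg: "simple_graph V E" using assms by simp
  have sy: "E a b \<longleftrightarrow> E b a" for a b using sg_sym[OF sg] by blast
  have fV: "finite V" using sg unfolding simple_graph_def by simp
  obtain c where c: "c \<in> nbhd E v"
    and cw: "\<forall>w\<in>nbhd E v. gdist (nbhd E v) (induced_adj E (nbhd E v)) c w \<le> 2"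
    using rad_get[OF r] by blast
  have Evc: "E v c" using c unfolding nbhd_def by simp
  have cV: "c \<in> V" using sg_V[OF sg Evc] by simp
  have cne: "c \<noteq> v" using Evc sg_irr[OF sg] by auto
  have cover: "w = c \<or> E c w \<or> (\<exists>y. E v y \<and> E c y \<and> E y w)" if "E v w" for w
  proof -
    have wN: "w \<in> nbhd E v" using that unfolding nbhd_def by simp
    obtain p where "walk (nbhd E v) (induced_adj E (nbhd E v)) p" "hd p = c" "last p = w" "length p \<le> 3"
      using gdist_2[OF cw[rule_format, OF wN]] by blast
    then have "c = w \<or> induced_adj E (nbhd E v) c w \<or> (\<exists>y. induced_adj E (nbhd E v) c y \<and> induced_adj E (nbhd E v) y w)"
      by (rule short_walk)
    then show ?thesis unfolding induced_adj_def nbhd_def by auto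
  qed
  have fN: "finite (nbhd E c - {v})"
    using fV sg_V[OF sg] unfolding nbhd_def by (auto intro: finite_subset[OF _ fV])
  obtain cs where cs: "distinct cs" "set cs = nbhd E c - {v}"
    using finite_distinct_list[OF fN] by blast
  have g0: "goodpre V E (c # cs @ [v])"
    by (rule init_good[OF sg cV sg_sym[OF sg Evc] cs])
  have l0: "length (c # cs @ [v]) \<le> card V"
  proof -
    have "card (set (c # cs @ [v])) = length (c # cs @ [v])"
      using g0 distinct_card unfolding goodpre_def by blast
    moreover have "set (c # cs @ [v]) \<subseteq> V" using g0 unfolding goodpre_def by blast
    ultimately show ?thesis using card_mono[OF fV] by metis
  qed
  obtain M where M: "goodpre V E ((c # cs @ [v]) @ M)" "length ((c # cs @ [v]) @ M) = card V"
    using extend_all[OF fV g0 l0] by blast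
  define \<sigma> where "\<sigma> = sigL ((c # cs @ [v]) @ M)"
  have bfs: "bfs_ordering V E \<sigma>" unfolding \<sigma>_def by (rule goodpre_bfs[OF fV M])
  interpret bfsg V E \<sigma> using assms bfs by unfold_locales auto
  have s_early: "\<sigma> i = (c # cs @ [v]) ! (i - 1)" if "1 \<le> i" "i \<le> length (c # cs @ [v])" for i
  proof -
    have "i - 1 < length (c # cs @ [v])" using that by auto
    then show ?thesis unfolding \<sigma>_def sigL_def by (rule nth_append_left)
  qed
  have s1: "\<sigma> 1 = c" using s_early[of 1] by simp
  define K where "K = length cs + 2"
  have sK: "\<sigma> K = v" using s_early[of K] unfolding K_def by (simp add: nth_append)
  have K: "K \<in> {1..card V}" using M unfolding K_def by auto
  have sk: "\<sigma> (k + 2) = cs ! k" "k + 2 \<in> {1..card V}" if "k < length cs" for k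
    using s_early[of "k+2"] that M by (auto simp: nth_append)
  have vr: "v \<noteq> \<sigma> 1" using s1 cne by auto
  have "\<forall>w\<in>V. w \<noteq> \<sigma> 1 \<longrightarrow> T w \<noteq> v"
  proof (intro ballI impI notI)
    fix w assume w: "w \<in> V" "w \<noteq> \<sigma> 1" "T w = v"
    have lw: "lp w \<in> {1..card V}" "E (\<sigma> (lp w)) w" using lp_props[OF w(1,2)] by auto
    have "lp w = K" using s_inj[OF lw(1) K] w(3) sK unfolding T_def by auto
    have Evw: "E v w" using lw w(3) unfolding T_def by simp
    show False
    proof (cases "E c w")
      case True
      have "lp w \<le> 1" using lp_props(4)[OF w(1,2), of 1] True s1 K by auto
      then show False using \<open>lp w = K\<close> unfolding K_def by auto
    next
      case False
      have "w \<noteq> c" using w s1 by auto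
      then obtain y where y: "E v y" "E c y" "E y w" using cover[OF Evw] False by auto
      have "y \<noteq> v" using y sg_irr[OF sg] by auto
      then have "y \<in> set cs" using cs y unfolding nbhd_def by auto
      then obtain k where k: "k < length cs" "cs ! k = y" by (auto simp: in_set_conv_nth)
      have "lp w \<le> k + 2" using lp_props(4)[OF w(1,2), of "k+2"] sk[OF k(1)] k y by auto
      then show False using \<open>lp w = K\<close> k unfolding K_def by auto
    qed
  qed
  then have "F_branch_leaf V E \<sigma> v" using leaf_iff[OF assms(5) vr] by auto
  then show "\<exists>\<sigma>. bfs_ordering V E \<sigma> \<and> F_branch_leaf V E \<sigma> v" using bfs by blast
qed

end
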